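(* Let $\Gamma\subseteq\mathbb{R}^n$ be a simple rectifiable curve. For $\epsilon>0$ and $p_1,p_2\in\mathbb{R}^n$ let $$L(\Gamma,\epsilon,p_1,p_2)=\inf\{\mathcal{H}^1(\Gamma'):\Gamma'\text{ is a simple rectifiable curve},\ \Gamma'\subseteq\Gamma(\epsilon),\ p_1,p_2\in\Gamma'\}.$$ Then $$\lim_{\epsilon\to0^+}\ \sup_{p_1,p_2\in\Gamma(\epsilon)}L(\Gamma,\epsilon,p_1,p_2)=\mathcal{H}^1(\Gamma).$$
   Context: A curve is the range of a continuous map $f:[a,b]\to\mathbb{R}^n$ with $a<b$; it is simple if it has a one-to-one such parametrization, and rectifiable if it has finite length. $\mathcal{H}^1$ denotes one-dimensional Hausdorff measure on $\mathbb{R}^n$ (which equals length on simple curves). For $A\subseteq\mathbb{R}^n$ and $\epsilon>0$, the Minkowski sausage is $A(\epsilon)=\{p\in\mathbb{R}^n:\inf_{p'\in A}|p-p'|\le\epsilon\}$. *)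

theory Defs
  imports "HOL-Analysis.Analysis"
begin

definition simple_curve :: "'a::euclidean_space set \<Rightarrow> bool" where
  "simple_curve \<Gamma> \<longleftrightarrow> (\<exists>a b (f::real \<Rightarrow> 'a). a < b \<and> continuous_on {a..b} f \<and>
      inj_on f {a..b} \<and> \<Gamma> = f ` {a..b})"

definition param_length :: "real \<Rightarrow> real \<Rightarrow> (real \<Rightarrow> 'a::euclidean_space) \<Rightarrow> ennreal" where
  "param_length a b f = (SUP (n, t) \<in> {(n::nat, t::nat \<Rightarrow> real). t 0 = a \<and> t n = b \<and> (\<forall>i<n. t i \<le> t (Suc i))}.
      (\<Sum>i<n. ennreal (dist (f (t (Suc i))) (f (t i)))))"

definition rectifiable_curve :: "'a::euclidean_space set \<Rightarrow> bool" where
  "rectifiable_curve \<Gamma> \<longleftrightarrow> (\<exists>a b (f::real \<Rightarrow> 'a). a < b \<and> continuous_on {a..b} f \<and>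
      \<Gamma> = f ` {a..b} \<and> param_length a b f < \<infinity>)"

text \<open>One-dimensional Hausdorff measure (normalised so that it equals length on simple curves):
  H^1(A) = sup over delta>0 of inf of sums of diameters of countable delta-covers.\<close>
definition hausdorff_pre1 :: "real \<Rightarrow> 'a::euclidean_space set \<Rightarrow> ennreal" where
  "hausdorff_pre1 \<delta> A = (INF C \<in> {C :: nat \<Rightarrow> 'a set. A \<subseteq> (\<Union>i. C i) \<and>
        (\<forall>i. bounded (C i) \<and> diameter (C i) \<le> \<delta>)}. (\<Sum>i. ennreal (diameter (C i))))"

definition hausdorff1 :: "'a::euclidean_space set \<Rightarrow> ennreal" where
  "hausdorff1 A = (SUP \<delta> \<in> {0<..}. hausdorff_pre1 \<delta> A)"

definition sausage :: "'a::euclidean_space set \<Rightarrow> real \<Rightarrow> 'a set" where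
  "sausage A \<epsilon> = {p. infdist p A \<le> \<epsilon>}"

definition Lfun :: "'a::euclidean_space set \<Rightarrow> real \<Rightarrow> 'a \<Rightarrow> 'a \<Rightarrow> ennreal" where
  "Lfun \<Gamma> \<epsilon> p1 p2 = (INF \<Gamma>' \<in> {\<Gamma>'. simple_curve \<Gamma>' \<and> rectifiable_curve \<Gamma>' \<and>
       \<Gamma>' \<subseteq> sausage \<Gamma> \<epsilon> \<and> p1 \<in> \<Gamma>' \<and> p2 \<in> \<Gamma>'}. hausdorff1 \<Gamma>')"

end

theory Submission
  imports Defs
begin


lemma hp_le_cover:
  assumes "A \<subseteq> (\<Union>i. C i)" "\<And>i. bounded (C i)" "\<And>i. diameter (C i) \<le> \<delta>"
  shows "hausdorff_pre1 \<delta> A \<le> (\<Sum>i. ennreal (diameter (C i)))"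
  unfolding hausdorff_pre1_def by (rule INF_lower) (use assms in auto)

lemma hp_le_H: "\<delta> > 0 \<Longrightarrow> hausdorff_pre1 \<delta> A \<le> hausdorff1 A"
  unfolding hausdorff1_def by (rule SUP_upper) auto

lemma hp_mono: "A \<subseteq> B \<Longrightarrow> hausdorff_pre1 \<delta> A \<le> hausdorff_pre1 \<delta> B"
  unfolding hausdorff_pre1_def by (rule INF_superset_mono) auto

lemma H_mono: "A \<subseteq> B \<Longrightarrow> hausdorff1 A \<le> hausdorff1 B"
  unfolding hausdorff1_def
proof (rule SUP_least)
  fix d :: real assume "A \<subseteq> B" "d \<in> {0<..}"
  then show "hausdorff_pre1 d A \<le> (SUP \<delta>\<in>{0<..}. hausdorff_pre1 \<delta> B)"
    by (meson SUP_upper2 hp_mono)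
qed

lemma hp_subadd: "hausdorff_pre1 \<delta> (A \<union> B) \<le> hausdorff_pre1 \<delta> A + hausdorff_pre1 \<delta> B"
proof (rule ennreal_le_epsilon)
  fix e :: real assume fin: "hausdorff_pre1 \<delta> A + hausdorff_pre1 \<delta> B < top" and e: "0 < e"
  have fA: "hausdorff_pre1 \<delta> A < top" and fB: "hausdorff_pre1 \<delta> B < top" using fin by (auto simp: top_unique)
  have "hausdorff_pre1 \<delta> A < hausdorff_pre1 \<delta> A + ennreal (e/2)"
    using fA e by (cases "hausdorff_pre1 \<delta> A") (auto simp flip: ennreal_plus simp: ennreal_less_iff)
  then obtain C where C: "A \<subseteq> (\<Union>i. C i)" "\<And>i. bounded (C i) \<and> diameter (C i) \<le> \<delta>"
     "(\<Sum>i. ennreal (diameter (C i))) < hausdorff_pre1 \<delta> A + ennreal (e/2)"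
    unfolding hausdorff_pre1_def[of \<delta> A] INF_less_iff by auto
  have "hausdorff_pre1 \<delta> B < hausdorff_pre1 \<delta> B + ennreal (e/2)"
    using fB e by (cases "hausdorff_pre1 \<delta> B") (auto simp flip: ennreal_plus simp: ennreal_less_iff)
  then obtain D where D: "B \<subseteq> (\<Union>i. D i)" "\<And>i. bounded (D i) \<and> diameter (D i) \<le> \<delta>"
     "(\<Sum>i. ennreal (diameter (D i))) < hausdorff_pre1 \<delta> B + ennreal (e/2)"
    unfolding hausdorff_pre1_def[of \<delta> B] INF_less_iff by auto
  define E where "E j = (if even j then C (j div 2) else D (j div 2))" for j
  have cov: "A \<union> B \<subseteq> (\<Union>j. E j)"
  proof
    fix x assume "x \<in> A \<union> B"
    then show "x \<in> (\<Union>j. E j)"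
    proof
      assume "x \<in> A" then obtain i where "x \<in> C i" using C(1) by auto
      then have "x \<in> E (2*i)" by (simp add: E_def)
      then show ?thesis by blast
    next
      assume "x \<in> B" then obtain i where "x \<in> D i" using D(1) by auto
      then have "x \<in> E (2*i+1)" by (simp add: E_def)
      then show ?thesis by blast
    qed
  qed
  have Eb: "bounded (E j) \<and> diameter (E j) \<le> \<delta>" for j using C(2) D(2) by (simp add: E_def)
  have "(\<Sum>j. ennreal (diameter (E j))) \<le> (\<Sum>i. ennreal (diameter (C i))) + (\<Sum>i. ennreal (diameter (D i)))"
  proof (rule suminf_le_const)
    show "summable (\<lambda>j. ennreal (diameter (E j)))" by simp
    fix m
    have "(\<Sum>j<m. ennreal (diameter (E j))) \<le> (\<Sum>j<m*2. ennreal (diameter (E j)))"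
      by (rule sum_mono2) auto
    also have "\<dots> = (\<Sum>i<m. (\<Sum>j\<in>{i*2..<i*2+2}. ennreal (diameter (E j))))"
      by (rule sum.nat_group[symmetric])
    also have "\<dots> = (\<Sum>i<m. ennreal (diameter (C i)) + ennreal (diameter (D i)))"
    proof (rule sum.cong)
      fix i assume "i \<in> {..<m}"
      have "{i*2..<i*2+2} = {2*i, 2*i+1}" by auto
      then show "(\<Sum>j\<in>{i*2..<i*2+2}. ennreal (diameter (E j))) = ennreal (diameter (C i)) + ennreal (diameter (D i))"
        by (simp add: E_def)
    qed simp
    also have "\<dots> = (\<Sum>i<m. ennreal (diameter (C i))) + (\<Sum>i<m. ennreal (diameter (D i)))"
      by (simp add: sum.distrib)
    also have "\<dots> \<le> (\<Sum>i. ennreal (diameter (C i))) + (\<Sum>i. ennreal (diameter (D i)))"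
      by (intro add_mono sum_le_suminf) auto
    finally show "(\<Sum>j<m. ennreal (diameter (E j))) \<le> \<dots>" .
  qed
  also have "\<dots> \<le> hausdorff_pre1 \<delta> A + ennreal (e/2) + (hausdorff_pre1 \<delta> B + ennreal (e/2))"
    using C(3) D(3) by (intro add_mono) auto
  also have "\<dots> = hausdorff_pre1 \<delta> A + hausdorff_pre1 \<delta> B + ennreal e"
    using e by (simp add: ac_simps flip: ennreal_plus)
  finally have "(\<Sum>j. ennreal (diameter (E j))) \<le> hausdorff_pre1 \<delta> A + hausdorff_pre1 \<delta> B + ennreal e" .
  moreover have "hausdorff_pre1 \<delta> (A \<union> B) \<le> (\<Sum>j. ennreal (diameter (E j)))"
    using Eb cov by (intro hp_le_cover) auto
  ultimately show "hausdorff_pre1 \<delta> (A \<union> B) \<le> hausdorff_pre1 \<delta> A + hausdorff_pre1 \<delta> B + ennreal e"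
    by order
qed

lemma H_subadd: "hausdorff1 (A \<union> B) \<le> hausdorff1 A + hausdorff1 B"
  unfolding hausdorff1_def[of "A \<union> B"]
proof (rule SUP_least)
  fix \<delta> :: real assume "\<delta> \<in> {0<..}"
  have "hausdorff_pre1 \<delta> (A \<union> B) \<le> hausdorff_pre1 \<delta> A + hausdorff_pre1 \<delta> B" by (rule hp_subadd)
  also have "\<dots> \<le> hausdorff1 A + hausdorff1 B" using \<open>\<delta> \<in> _\<close> by (intro add_mono hp_le_H) auto
  finally show "hausdorff_pre1 \<delta> (A \<union> B) \<le> hausdorff1 A + hausdorff1 B" .
qed



lemma cover_sum_ge_dist:
  fixes K :: "'a::euclidean_space set"
  assumes K: "connected K" "x \<in> K" "y \<in> K" and cov: "K \<subseteq> (\<Union>i. C i)" and bd: "\<And>i. bounded (C i)"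
  shows "ennreal (dist x y) \<le> (\<Sum>i. ennreal (diameter (C i)))"
proof (cases "x = y")
  case True then show ?thesis by simp
next
  case False
  define L where "L = norm (y - x)"
  have Lpos: "L > 0" using False by (simp add: L_def)
  define u where "u = (y - x) /\<^sub>R L"
  have nu: "norm u = 1" using Lpos by (simp add: u_def L_def)
  define \<pi> where "\<pi> z = (z - x) \<bullet> u" for z
  have lip: "\<bar>\<pi> z - \<pi> w\<bar> \<le> dist z w" for z w
  proof -
    have "\<pi> z - \<pi> w = (z - w) \<bullet> u" by (simp add: \<pi>_def inner_diff_left)
    then have "\<bar>\<pi> z - \<pi> w\<bar> \<le> norm (z - w) * norm u" by (metis Cauchy_Schwarz_ineq2)
    then show ?thesis using nu by (simp add: dist_norm)
  qed
  have cont: "continuous_on UNIV \<pi>" unfolding \<pi>_def by (intro continuous_intros)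
  have px: "\<pi> x = 0" by (simp add: \<pi>_def)
  have py: "\<pi> y = L"
  proof -
    have "\<pi> y = ((y - x) \<bullet> (y - x)) / L" by (simp add: \<pi>_def u_def divide_inverse_commute)
    also have "(y - x) \<bullet> (y - x) = L * L" by (simp add: L_def flip: power2_norm_eq_inner power2_eq_square)
    finally show ?thesis using Lpos by simp
  qed
  have "connected (\<pi> ` K)" using connected_continuous_image[OF continuous_on_subset[OF cont subset_UNIV] K(1)] .
  then have IccK: "{0..L} \<subseteq> \<pi> ` K" using connected_contains_Icc[of "\<pi> ` K" 0 L] K px py by (metis image_eqI)
  define I where "I i = (if C i = {} then {} else {Inf (\<pi> ` C i) .. Sup (\<pi> ` C i)})" for i
  have bdI: "bounded (\<pi> ` C i)" for i
  proof -
    obtain R where R: "\<And>z. z \<in> C i \<Longrightarrow> norm z \<le> R" using bd[of i] by (auto simp: bounded_iff)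
    have "\<bar>\<pi> z\<bar> \<le> R + norm x" if "z \<in> C i" for z
    proof -
      have "\<bar>\<pi> z\<bar> = \<bar>\<pi> z - \<pi> x\<bar>" by (simp add: px)
      also have "\<dots> \<le> dist z x" by (rule lip)
      also have "\<dots> \<le> norm z + norm x" by (simp add: dist_norm norm_triangle_ineq4)
      finally show ?thesis using R[OF that] by simp
    qed
    then show ?thesis by (auto simp: bounded_iff)
  qed
  have sub: "\<pi> ` C i \<subseteq> I i" for i
  proof (cases "C i = {}")
    case True then show ?thesis by simp
  next
    case False
    have "bdd_above (\<pi> ` C i)" "bdd_below (\<pi> ` C i)" using bdI[of i] by (auto intro: bounded_imp_bdd_above bounded_imp_bdd_below)
    then have "Inf (\<pi> ` C i) \<le> \<pi> z \<and> \<pi> z \<le> Sup (\<pi> ` C i)" if "z \<in> C i" for z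
      using that by (meson cInf_lower cSup_upper imageI)
    then show ?thesis using False by (auto simp: I_def)
  qed
  have measI: "emeasure lborel (I i) \<le> ennreal (diameter (C i))" for i
  proof (cases "C i = {}")
    case True then show ?thesis by (simp add: I_def)
  next
    case False
    have ba: "bdd_above (\<pi> ` C i)" and bb: "bdd_below (\<pi> ` C i)" using bdI[of i] by (auto intro: bounded_imp_bdd_above bounded_imp_bdd_below)
    have le: "Inf (\<pi> ` C i) \<le> Sup (\<pi> ` C i)" using False ba bb by (simp add: cInf_le_cSup)
    have "Sup (\<pi> ` C i) - diameter (C i) \<le> \<pi> w" if w: "w \<in> C i" for w
    proof -
      have "\<pi> z \<le> \<pi> w + diameter (C i)" if "z \<in> C i" for z
        using lip[of z w] diameter_bounded_bound[OF bd that w] by linarith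
      then have "Sup (\<pi> ` C i) \<le> \<pi> w + diameter (C i)" using False by (intro cSup_least) blast+
      then show ?thesis by simp
    qed
    then have "Sup (\<pi> ` C i) - diameter (C i) \<le> Inf (\<pi> ` C i)" using False by (intro cInf_greatest) blast+
    then show ?thesis using le False by (simp add: I_def)
  qed
  have "ennreal L = emeasure lborel {0..L}" using Lpos by simp
  also have "\<dots> \<le> emeasure lborel (\<Union>i. I i)"
  proof (rule emeasure_mono)
    show "{0..L} \<subseteq> (\<Union>i. I i)"
    proof
      fix t assume "t \<in> {0..L}"
      then obtain z where z: "z \<in> K" "t = \<pi> z" using IccK by auto
      then obtain i where "z \<in> C i" using cov by auto
      then have "t \<in> I i" using sub[of i] z(2) by auto
      then show "t \<in> (\<Union>i. I i)" by auto
    qed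
    show "(\<Union>i. I i) \<in> sets lborel" by (auto simp: I_def)
  qed
  also have "\<dots> \<le> (\<Sum>i. emeasure lborel (I i))"
    by (rule emeasure_subadditive_countably) (simp add: I_def image_subset_iff)
  also have "\<dots> \<le> (\<Sum>i. ennreal (diameter (C i)))" by (rule suminf_le[OF measI]) simp_all
  finally show ?thesis by (simp add: L_def dist_norm norm_minus_commute)
qed

lemma hp_ge_dist:
  fixes K :: "'a::euclidean_space set"
  assumes "connected K" "x \<in> K" "y \<in> K"
  shows "ennreal (dist x y) \<le> hausdorff_pre1 \<delta> K"
  unfolding hausdorff_pre1_def
proof (rule INF_greatest)
  fix C :: "nat \<Rightarrow> 'a set" assume "C \<in> {C. K \<subseteq> (\<Union>i. C i) \<and> (\<forall>i. bounded (C i) \<and> diameter (C i) \<le> \<delta>)}"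
  then show "ennreal (dist x y) \<le> (\<Sum>i. ennreal (diameter (C i)))"
    using cover_sum_ge_dist[OF assms, of C] by blast
qed



lemma finite_pos_choice:
  assumes "finite S" "\<And>x. x \<in> S \<Longrightarrow> \<exists>d>0. P x (d::real)"
    "\<And>x d d'. P x d \<Longrightarrow> 0 < d' \<Longrightarrow> d' \<le> d \<Longrightarrow> P x d'"
  shows "\<exists>d>0. \<forall>x\<in>S. P x d"
  using assms(1,2)
proof (induction S rule: finite_induct)
  case empty then show ?case by (intro exI[of _ 1]) auto
next
  case (insert a S)
  have "\<exists>d>0. \<forall>x\<in>S. P x d" using insert.IH insert.prems by blast
  then obtain d1 where d1: "d1 > 0" "\<forall>x\<in>S. P x d1" by blast
  obtain d2 where d2: "d2 > 0" "P a d2" using insert.prems by blast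
  have "\<forall>x\<in>insert a S. P x (min d1 d2)"
  proof
    fix x assume x: "x \<in> insert a S"
    show "P x (min d1 d2)"
    proof (cases "x = a")
      case True then show ?thesis using assms(3)[OF d2(2)] d1 d2 by simp
    next
      case False then have Px: "P x d1" using d1 x by blast
      show ?thesis using assms(3)[OF Px] d1 d2 by simp
    qed
  qed
  then show ?case using d1 d2 by (intro exI[of _ "min d1 d2"]) simp
qed

lemma mono_chain:
  fixes \<tau> :: "nat \<Rightarrow> real"
  assumes "\<forall>i<n. \<tau> i \<le> \<tau> (Suc i)" "i \<le> j" "j \<le> n"
  shows "\<tau> i \<le> \<tau> j"
  using assms(2,3)
proof (induction j)
  case 0 then show ?case by simp
next
  case (Suc j)
  show ?case
  proof (cases "i = Suc j")
    case True then show ?thesis by simp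
  next
    case False
    then have "\<tau> i \<le> \<tau> j" using Suc by simp
    also have "\<tau> j \<le> \<tau> (Suc j)" using assms(1) Suc by simp
    finally show ?thesis .
  qed
qed

lemma hp_sep_add:
  fixes A :: "nat \<Rightarrow> 'a::euclidean_space set"
  assumes sep: "\<And>i j x y. i < n \<Longrightarrow> j < n \<Longrightarrow> i \<noteq> j \<Longrightarrow> x \<in> A i \<Longrightarrow> y \<in> A j \<Longrightarrow> d0 \<le> dist x y"
    and \<delta>: "0 < \<delta>" "\<delta> < d0"
  shows "(\<Sum>i<n. hausdorff_pre1 \<delta> (A i)) \<le> hausdorff_pre1 \<delta> (\<Union>i<n. A i)"
  unfolding hausdorff_pre1_def[of \<delta> "\<Union>i<n. A i"]
proof (rule INF_greatest)
  fix C :: "nat \<Rightarrow> 'a set"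
  assume "C \<in> {C. (\<Union>i<n. A i) \<subseteq> (\<Union>i. C i) \<and> (\<forall>i. bounded (C i) \<and> diameter (C i) \<le> \<delta>)}"
  then have cov: "(\<Union>i<n. A i) \<subseteq> (\<Union>i. C i)" and bd: "\<And>i. bounded (C i)" and dm: "\<And>i. diameter (C i) \<le> \<delta>"
    by auto
  define D where "D i j = (if C j \<inter> A i \<noteq> {} then C j else {})" for i j
  have "hausdorff_pre1 \<delta> (A i) \<le> (\<Sum>j. ennreal (diameter (D i j)))" if "i < n" for i
  proof (rule hp_le_cover)
    show "A i \<subseteq> (\<Union>j. D i j)"
    proof
      fix x assume xA: "x \<in> A i"
      have "x \<in> (\<Union>i<n. A i)" using xA \<open>i < n\<close> by blast
      then have "x \<in> (\<Union>j. C j)" by (rule subsetD[OF cov])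
      then obtain j where xC: "x \<in> C j" by blast
      then have "C j \<inter> A i \<noteq> {}" using xA by blast
      then have "x \<in> D i j" using xC unfolding D_def by simp
      then show "x \<in> (\<Union>j. D i j)" by blast
    qed
    show "bounded (D i j)" for j using bd by (simp add: D_def)
    show "diameter (D i j) \<le> \<delta>" for j using dm \<delta> by (simp add: D_def)
  qed
  then have "(\<Sum>i<n. hausdorff_pre1 \<delta> (A i)) \<le> (\<Sum>i<n. \<Sum>j. ennreal (diameter (D i j)))"
    by (rule sum_mono) simp
  also have "\<dots> = (\<Sum>j. \<Sum>i<n. ennreal (diameter (D i j)))"
    by (rule suminf_sum[symmetric]) (rule summableI)
  also have "\<dots> \<le> (\<Sum>j. ennreal (diameter (C j)))"
  proof (rule suminf_le)
    fix j
    show "(\<Sum>i<n. ennreal (diameter (D i j))) \<le> ennreal (diameter (C j))"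
    proof (cases "\<exists>i0<n. C j \<inter> A i0 \<noteq> {}")
      case False
      then have "D i j = {}" if "i < n" for i using that by (auto simp: D_def)
      then show ?thesis by simp
    next
      case True
      then obtain i0 where i0: "i0 < n" "C j \<inter> A i0 \<noteq> {}" by blast
      have "ennreal (diameter (D i j)) = (if i = i0 then ennreal (diameter (C j)) else 0)" if "i < n" for i
      proof (cases "i = i0")
        case True then show ?thesis using i0 by (simp add: D_def)
      next
        case False
        have "C j \<inter> A i = {}"
        proof (rule ccontr)
          assume "C j \<inter> A i \<noteq> {}"
          then obtain x where x: "x \<in> C j" "x \<in> A i" by blast
          obtain y where y: "y \<in> C j" "y \<in> A i0" using i0 by blast
          have "d0 \<le> dist x y" using sep[OF that i0(1) False x(2) y(2)] .
          moreover have "dist x y \<le> diameter (C j)" using diameter_bounded_bound[OF bd x(1) y(1)] .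
          ultimately show False using dm[of j] \<delta> by linarith
        qed
        then show ?thesis using False by (simp add: D_def)
      qed
      then have "(\<Sum>i<n. ennreal (diameter (D i j))) = (\<Sum>i<n. (if i = i0 then ennreal (diameter (C j)) else 0))"
        by (intro sum.cong) auto
      also have "\<dots> = ennreal (diameter (C j))" using i0(1) by simp
      finally show ?thesis by simp
    qed
  qed (simp_all only: summableI)
  finally show "(\<Sum>i<n. hausdorff_pre1 \<delta> (A i)) \<le> (\<Sum>j. ennreal (diameter (C j)))" .
qed



lemma chord_le_H:
  fixes p :: "real \<Rightarrow> 'a::euclidean_space"
  assumes cont: "continuous_on {c..d} p" and inj: "inj_on p {c..d}"
    and mono: "\<forall>i<n. \<tau> i \<le> \<tau> (Suc i)" and c: "c \<le> \<tau> 0" and d: "\<tau> n \<le> d"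
  shows "ennreal (\<Sum>i<n. dist (p (\<tau> (Suc i))) (p (\<tau> i))) \<le> hausdorff1 (p ` {c..d})"
proof -
  have tin: "c \<le> \<tau> i \<and> \<tau> i \<le> d" if "i \<le> n" for i
    using mono_chain[OF mono, of 0 i] mono_chain[OF mono, of i n] that c d by auto
  show ?thesis
  proof (rule ennreal_le_epsilon)
    fix e :: real assume e: "0 < e"
    define \<zeta> where "\<zeta> = e / (2 * real n + 1)"
    have \<zeta>: "0 < \<zeta>" using e by (simp add: \<zeta>_def)
    have \<zeta>e: "2 * real n * \<zeta> \<le> e"
    proof -
      have "2 * real n * \<zeta> = e * (2 * real n / (2 * real n + 1))" by (simp add: \<zeta>_def)
      also have "\<dots> \<le> e * 1" using e by (intro mult_left_mono) auto
      finally show ?thesis by simp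
    qed
    have "uniformly_continuous_on {c..d} p" using cont by (simp add: compact_uniformly_continuous)
    then obtain \<eta>0 where \<eta>0: "\<eta>0 > 0"
      and uc: "\<And>s s'. s \<in> {c..d} \<Longrightarrow> s' \<in> {c..d} \<Longrightarrow> dist s' s < \<eta>0 \<Longrightarrow> dist (p s') (p s) < \<zeta>"
      unfolding uniformly_continuous_on_def using \<zeta> by metis
    define \<eta> where "\<eta> = \<eta>0 / 3"
    have \<eta>: "\<eta> > 0" using \<eta>0 by (simp add: \<eta>_def)
    define N where "N i \<longleftrightarrow> \<tau> i + \<eta> \<le> \<tau> (Suc i) - \<eta>" for i
    define A where "A i = (if N i then p ` {\<tau> i + \<eta> .. \<tau> (Suc i) - \<eta>} else {})" for i
    define g where "g i = (if N i then dist (p (\<tau> (Suc i) - \<eta>)) (p (\<tau> i + \<eta>)) else 0)" for i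
    have Isub: "{\<tau> i + \<eta> .. \<tau> (Suc i) - \<eta>} \<subseteq> {c..d}" if "i < n" for i
      using tin[of i] tin[of "Suc i"] that \<eta> by auto
    have chord: "dist (p (\<tau> (Suc i))) (p (\<tau> i)) \<le> g i + 2 * \<zeta>" if i: "i < n" for i
    proof (cases "N i")
      case True
      have in1: "\<tau> i \<in> {c..d}" "\<tau> (Suc i) \<in> {c..d}" using tin[of i] tin[of "Suc i"] i by auto
      have in2: "\<tau> i + \<eta> \<in> {c..d}" "\<tau> (Suc i) - \<eta> \<in> {c..d}" using Isub[OF i] True \<eta> by (auto simp: N_def)
      have "dist (p (\<tau> (Suc i))) (p (\<tau> i)) \<le> dist (p (\<tau> (Suc i))) (p (\<tau> (Suc i) - \<eta>))
          + dist (p (\<tau> (Suc i) - \<eta>)) (p (\<tau> i + \<eta>)) + dist (p (\<tau> i + \<eta>)) (p (\<tau> i))"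
        using dist_triangle[of "p (\<tau> (Suc i))" "p (\<tau> i)" "p (\<tau> (Suc i) - \<eta>)"]
          dist_triangle[of "p (\<tau> (Suc i) - \<eta>)" "p (\<tau> i)" "p (\<tau> i + \<eta>)"] by linarith
      moreover have "dist (p (\<tau> (Suc i))) (p (\<tau> (Suc i) - \<eta>)) < \<zeta>"
        using uc[OF in2(2) in1(2)] \<eta> \<eta>0 by (simp add: \<eta>_def dist_real_def)
      moreover have "dist (p (\<tau> i + \<eta>)) (p (\<tau> i)) < \<zeta>"
        using uc[OF in1(1) in2(1)] \<eta> \<eta>0 by (simp add: \<eta>_def dist_real_def)
      ultimately show ?thesis using True by (simp add: g_def)
    next
      case False
      have in1: "\<tau> i \<in> {c..d}" "\<tau> (Suc i) \<in> {c..d}" using tin[of i] tin[of "Suc i"] i by auto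
      have "\<tau> i \<le> \<tau> (Suc i)" using mono i by simp
      then have "dist (\<tau> (Suc i)) (\<tau> i) < \<eta>0" using False by (simp add: N_def \<eta>_def dist_real_def)
      then have "dist (p (\<tau> (Suc i))) (p (\<tau> i)) < \<zeta>" using uc[OF in1(1) in1(2)] by simp
      then show ?thesis using False \<zeta> by (simp add: g_def)
    qed
    have disj: "x \<noteq> y" if ij: "i < j" "j < n" and x: "x \<in> A i" and y: "y \<in> A j" for i j x y
    proof -
      have Ni: "N i" using x by (auto simp: A_def split: if_splits)
      have Nj: "N j" using y by (auto simp: A_def split: if_splits)
      obtain s where s: "s \<in> {\<tau> i + \<eta> .. \<tau> (Suc i) - \<eta>}" "x = p s" using x Ni by (auto simp: A_def)
      obtain t where t: "t \<in> {\<tau> j + \<eta> .. \<tau> (Suc j) - \<eta>}" "y = p t" using y Nj by (auto simp: A_def)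
      have "\<tau> (Suc i) \<le> \<tau> j" using mono_chain[OF mono, of "Suc i" j] ij by simp
      then have "s < t" using s t \<eta> by auto
      moreover have "s \<in> {c..d}" "t \<in> {c..d}" using s(1) t(1) Isub[of i] Isub[of j] ij by auto
      ultimately show ?thesis using inj s(2) t(2) by (metis inj_on_eq_iff less_irrefl)
    qed
    have cpt: "compact (A i)" if "i < n" for i
    proof (cases "N i")
      case True
      have "continuous_on {\<tau> i + \<eta> .. \<tau> (Suc i) - \<eta>} p" using continuous_on_subset[OF cont Isub[OF that]] .
      then show ?thesis using True by (simp add: A_def compact_continuous_image)
    qed (simp add: A_def)
    define P where "P ij d \<longleftrightarrow> (fst ij \<noteq> snd ij \<longrightarrow> (\<forall>x\<in>A (fst ij). \<forall>y\<in>A (snd ij). d \<le> dist x y))" for ij d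
    have "\<exists>d0>0. \<forall>ij\<in>{..<n}\<times>{..<n}. P ij d0"
    proof (rule finite_pos_choice)
      show "finite ({..<n}\<times>{..<n})" by simp
      show "P ij d'" if "P ij d" "0 < d'" "d' \<le> d" for ij d d' using that by (force simp: P_def)
      fix ij assume ij: "ij \<in> {..<n}\<times>{..<n}"
      obtain i j where ij': "ij = (i,j)" "i < n" "j < n" using ij by auto
      show "\<exists>d>0. P ij d"
      proof (cases "i = j \<or> A i = {} \<or> A j = {}")
        case True then show ?thesis by (intro exI[of _ 1]) (auto simp: P_def ij')
      next
        case False
        have "A i \<inter> A j = {}"
        proof (rule ccontr)
          assume "A i \<inter> A j \<noteq> {}"
          then obtain z where "z \<in> A i" "z \<in> A j" by blast
          then show False using disj[of i j z z] disj[of j i z z] ij' False by (metis linorder_neqE_nat)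
        qed
        then have "setdist (A i) (A j) \<noteq> 0"
          using setdist_eq_0_compact_closed[OF cpt[OF ij'(2)] compact_imp_closed[OF cpt[OF ij'(3)]]] False by blast
        then have pos: "setdist (A i) (A j) > 0" using setdist_pos_le[of "A i" "A j"] by linarith
        have "P ij (setdist (A i) (A j))" by (auto simp: P_def ij' setdist_le_dist)
        then show ?thesis using pos by blast
      qed
    qed
    then obtain d0 where d0: "d0 > 0" and Pd0: "\<And>ij. ij \<in> {..<n}\<times>{..<n} \<Longrightarrow> P ij d0" by blast
    have sep: "d0 \<le> dist x y" if "i < n" "j < n" "i \<noteq> j" "x \<in> A i" "y \<in> A j" for i j x y
      using Pd0[of "(i,j)"] that by (auto simp: P_def)
    define \<delta> where "\<delta> = d0 / 2"
    have \<delta>: "0 < \<delta>" "\<delta> < d0" using d0 by (auto simp: \<delta>_def)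
    have gle: "ennreal (g i) \<le> hausdorff_pre1 \<delta> (A i)" if i: "i < n" for i
    proof (cases "N i")
      case True
      have "continuous_on {\<tau> i + \<eta> .. \<tau> (Suc i) - \<eta>} p" using continuous_on_subset[OF cont Isub[OF i]] .
      then have "connected (p ` {\<tau> i + \<eta> .. \<tau> (Suc i) - \<eta>})" by (simp add: connected_continuous_image)
      moreover have "p (\<tau> (Suc i) - \<eta>) \<in> p ` {\<tau> i + \<eta> .. \<tau> (Suc i) - \<eta>}" "p (\<tau> i + \<eta>) \<in> p ` {\<tau> i + \<eta> .. \<tau> (Suc i) - \<eta>}"
        using True by (auto simp: N_def)
      ultimately show ?thesis using True hp_ge_dist by (simp add: g_def A_def)
    qed (simp add: g_def)
    have gnn: "0 \<le> g i" for i by (simp add: g_def)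
    have "ennreal (\<Sum>i<n. dist (p (\<tau> (Suc i))) (p (\<tau> i))) \<le> ennreal (\<Sum>i<n. g i + 2 * \<zeta>)"
      using chord by (intro ennreal_leI sum_mono) auto
    also have "(\<Sum>i<n. g i + 2 * \<zeta>) = (\<Sum>i<n. g i) + 2 * real n * \<zeta>" by (simp add: sum.distrib)
    also have "ennreal \<dots> = ennreal (\<Sum>i<n. g i) + ennreal (2 * real n * \<zeta>)"
      using gnn \<zeta> by (intro ennreal_plus) (auto intro: sum_nonneg)
    finally have S1: "ennreal (\<Sum>i<n. dist (p (\<tau> (Suc i))) (p (\<tau> i))) \<le> ennreal (\<Sum>i<n. g i) + ennreal (2 * real n * \<zeta>)" .
    have "ennreal (\<Sum>i<n. g i) = (\<Sum>i<n. ennreal (g i))" using gnn by simp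
    also have "\<dots> \<le> (\<Sum>i<n. hausdorff_pre1 \<delta> (A i))" using gle by (intro sum_mono) simp
    also have "\<dots> \<le> hausdorff_pre1 \<delta> (\<Union>i<n. A i)" using hp_sep_add[OF sep \<delta>] by simp
    also have "\<dots> \<le> hausdorff_pre1 \<delta> (p ` {c..d})"
    proof (rule hp_mono)
      show "(\<Union>i<n. A i) \<subseteq> p ` {c..d}"
      proof
        fix z assume "z \<in> (\<Union>i<n. A i)"
        then obtain i where i: "i < n" "z \<in> A i" by blast
        then have "z \<in> p ` {\<tau> i + \<eta> .. \<tau> (Suc i) - \<eta>}" by (simp add: A_def split: if_splits)
        then show "z \<in> p ` {c..d}" using Isub[OF i(1)] by blast
      qed
    qed
    also have "\<dots> \<le> hausdorff1 (p ` {c..d})" using \<delta>(1) by (rule hp_le_H)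
    finally have S2: "ennreal (\<Sum>i<n. g i) \<le> hausdorff1 (p ` {c..d})" .
    have "ennreal (\<Sum>i<n. g i) + ennreal (2 * real n * \<zeta>) \<le> hausdorff1 (p ` {c..d}) + ennreal e"
      by (rule add_mono[OF S2 ennreal_leI[OF \<zeta>e]])
    with S1 show "ennreal (\<Sum>i<n. dist (p (\<tau> (Suc i))) (p (\<tau> i))) \<le> hausdorff1 (p ` {c..d}) + ennreal e"
      by (rule order_trans)
  qed
qed



lemma part_cover:
  fixes t :: "nat \<Rightarrow> real"
  assumes "\<forall>i<N. t i \<le> t (Suc i)" "t 0 \<le> s" "s \<le> t N" "N > 0"
  shows "\<exists>k<N. t k \<le> s \<and> s \<le> t (Suc k)"
  using assms
proof (induction N)
  case 0 then show ?case by simp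
next
  case (Suc N)
  show ?case
  proof (cases "s \<le> t N")
    case True
    show ?thesis
    proof (cases "N = 0")
      case True
      then show ?thesis using Suc.prems \<open>s \<le> t N\<close> by (intro exI[of _ 0]) simp
    next
      case False
      have "\<forall>i<N. t i \<le> t (Suc i)" using Suc.prems(1) by simp
      then obtain k where "k < N" "t k \<le> s" "s \<le> t (Suc k)" using Suc.IH Suc.prems(2) True False by blast
      then show ?thesis by (intro exI[of _ k]) simp
    qed
  next
    case False
    then show ?thesis using Suc.prems by (intro exI[of _ N]) simp
  qed
qed

lemma chord_le_param_length:
  assumes "t 0 = a" "t n = b" "\<forall>i<n. t i \<le> t (Suc i)"
  shows "(\<Sum>i<n. ennreal (dist (f (t (Suc i))) (f (t i)))) \<le> param_length a b f"
  unfolding param_length_def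
  by (rule SUP_upper2[of "(n,t)"]) (use assms in auto)

lemma H_le_param_length:
  fixes f :: "real \<Rightarrow> 'a::euclidean_space"
  assumes ab: "a < b" and cont: "continuous_on {a..b} f"
  shows "hausdorff1 (f ` {a..b}) \<le> param_length a b f"
  unfolding hausdorff1_def
proof (rule SUP_least)
  fix \<delta> :: real assume "\<delta> \<in> {0<..}"
  then have \<delta>: "\<delta> > 0" by simp
  have "uniformly_continuous_on {a..b} f" using cont by (simp add: compact_uniformly_continuous)
  then obtain \<eta> where \<eta>: "\<eta> > 0"
    and uc: "\<And>s s'. s \<in> {a..b} \<Longrightarrow> s' \<in> {a..b} \<Longrightarrow> dist s' s < \<eta> \<Longrightarrow> dist (f s') (f s) < \<delta>"
    unfolding uniformly_continuous_on_def using \<delta> by metis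
  obtain N :: nat where N: "(b - a) / \<eta> < N" using reals_Archimedean2 by blast
  have Npos: "N > 0" using N ab \<eta> by (cases N) (auto simp: divide_simps)
  define t where "t k = a + real k * (b - a) / real N" for k
  have tmono: "t k \<le> t (Suc k)" for k using ab Npos by (simp add: t_def divide_simps)
  have t0: "t 0 = a" and tN: "t N = b" using Npos by (auto simp: t_def)
  have tin: "a \<le> t k \<and> t k \<le> b" if "k \<le> N" for k
  proof -
    have "real k * (b - a) \<le> real N * (b - a)" using that ab by (intro mult_right_mono) auto
    then have "real k * (b - a) / real N \<le> real N * (b - a) / real N" by (rule divide_right_mono) simp
    also have "\<dots> = b - a" using Npos by simp
    finally have 1: "real k * (b - a) / real N \<le> b - a" .
    have 2: "0 \<le> real k * (b - a) / real N" using ab by simp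
    show ?thesis using 1 2 by (simp add: t_def)
  qed
  have width: "t (Suc k) - t k < \<eta>" for k
  proof -
    have "t (Suc k) - t k = (b - a) / real N" by (simp add: t_def divide_simps algebra_simps)
    also have "\<dots> < \<eta>" using N \<eta> Npos by (simp add: divide_simps mult.commute)
    finally show ?thesis .
  qed
  define P where "P k = f ` {t k .. t (Suc k)}" for k
  have Psub: "{t k .. t (Suc k)} \<subseteq> {a..b}" if "k < N" for k using tin[of k] tin[of "Suc k"] that by auto
  have Pcpt: "compact (P k)" if "k < N" for k
    unfolding P_def by (rule compact_continuous_image[OF continuous_on_subset[OF cont Psub[OF that]]]) simp
  have Pne: "P k \<noteq> {}" for k using tmono[of k] by (auto simp: P_def)
  have "\<exists>l r. t k \<le> l \<and> l \<le> r \<and> r \<le> t (Suc k) \<and> diameter (P k) = dist (f r) (f l)" if kN: "k < N" for k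
  proof -
    obtain x y where xy: "x \<in> P k" "y \<in> P k" "dist x y = diameter (P k)"
      using diameter_compact_attained[OF Pcpt[OF kN] Pne] by blast
    obtain u v where uv: "u \<in> {t k .. t (Suc k)}" "v \<in> {t k .. t (Suc k)}" "x = f u" "y = f v"
      using xy by (auto simp: P_def)
    show ?thesis
    proof (cases "u \<le> v")
      case True then show ?thesis using uv xy by (intro exI[of _ u] exI[of _ v]) (auto simp: dist_commute)
    next
      case False then show ?thesis using uv xy by (intro exI[of _ v] exI[of _ u]) auto
    qed
  qed
  then obtain l r where lr: "\<And>k. k < N \<Longrightarrow> t k \<le> l k \<and> l k \<le> r k \<and> r k \<le> t (Suc k) \<and> diameter (P k) = dist (f (r k)) (f (l k))"
    by metis
  define C where "C k = (if k < N then P k else {})" for k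
  have Cdiam: "diameter (C k) \<le> \<delta>" for k
  proof (cases "k < N")
    case True
    have "norm (x - y) \<le> \<delta>" if xP: "x \<in> P k" "y \<in> P k" for x y
    proof -
      obtain u v where uv: "u \<in> {t k .. t (Suc k)}" "v \<in> {t k .. t (Suc k)}" "x = f u" "y = f v"
        using xP by (auto simp: P_def)
      have "dist u v < \<eta>" using uv(1,2) width[of k] by (auto simp: dist_real_def)
      then have "dist (f u) (f v) < \<delta>" using uc[of v u] uv Psub[OF True] by auto
      then show ?thesis using uv by (simp add: dist_norm)
    qed
    then show ?thesis using True \<delta> by (simp add: C_def diameter_le)
  qed (simp add: C_def \<delta>[THEN less_imp_le])
  have Cbd: "bounded (C k)" for k using Pcpt by (simp add: C_def compact_imp_bounded)
  have Ccov: "f ` {a..b} \<subseteq> (\<Union>k. C k)"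
  proof
    fix y assume "y \<in> f ` {a..b}"
    then obtain s where s: "s \<in> {a..b}" "y = f s" by blast
    obtain k where k: "k < N" "t k \<le> s" "s \<le> t (Suc k)"
      using part_cover[of N t s] tmono t0 tN s(1) Npos by auto
    then have "y \<in> C k" using s by (auto simp: C_def P_def)
    then show "y \<in> (\<Union>k. C k)" by blast
  qed
  have "hausdorff_pre1 \<delta> (f ` {a..b}) \<le> (\<Sum>k. ennreal (diameter (C k)))"
    using Ccov Cbd Cdiam by (rule hp_le_cover)
  also have "(\<Sum>k. ennreal (diameter (C k))) = (\<Sum>k<N. ennreal (diameter (P k)))"
    by (subst suminf_finite[of "{..<N}"]) (auto simp: C_def)
  also have "\<dots> = (\<Sum>k<N. ennreal (dist (f (r k)) (f (l k))))" using lr by (intro sum.cong) auto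
  also have "\<dots> \<le> param_length a b f"
  proof -
    define s where "s j = (if j mod 3 = 0 then t (j div 3) else if j mod 3 = 1 then l (j div 3) else r (j div 3))" for j
    have s0: "s 0 = a" using t0 by (simp add: s_def)
    have sN: "s (N * 3) = b" using tN by (simp add: s_def)
    have smono: "\<forall>j<N*3. s j \<le> s (Suc j)"
    proof (intro allI impI)
      fix j assume j: "j < N * 3"
      have k: "j div 3 < N" using j by simp
      have "j mod 3 = 0 \<or> j mod 3 = 1 \<or> j mod 3 = 2" by arith
      moreover
      { assume "j mod 3 = 0"
        then have "Suc j mod 3 = 1" "Suc j div 3 = j div 3" by (simp_all add: mod_Suc div_Suc)
        then have "s j \<le> s (Suc j)" using \<open>j mod 3 = 0\<close> lr[OF k] by (simp add: s_def) }
      moreover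
      { assume "j mod 3 = 1"
        then have "Suc j mod 3 = 2" "Suc j div 3 = j div 3" by (simp_all add: mod_Suc div_Suc)
        then have "s j \<le> s (Suc j)" using \<open>j mod 3 = 1\<close> lr[OF k] by (simp add: s_def) }
      moreover
      { assume "j mod 3 = 2"
        then have "Suc j mod 3 = 0" "Suc j div 3 = Suc (j div 3)" by (simp_all add: mod_Suc div_Suc)
        then have "s j \<le> s (Suc j)" using \<open>j mod 3 = 2\<close> lr[OF k] by (simp add: s_def) }
      ultimately show "s j \<le> s (Suc j)" by argo
    qed
    have "(\<Sum>k<N. ennreal (dist (f (r k)) (f (l k)))) \<le> (\<Sum>k<N. \<Sum>j\<in>{k*3..<k*3+3}. ennreal (dist (f (s (Suc j))) (f (s j))))"
    proof (rule sum_mono)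
      fix k assume "k \<in> {..<N}"
      have m: "(k*3+1) mod 3 = 1" "(k*3+1) div 3 = k" "(k*3+2) mod 3 = 2" "(k*3+2) div 3 = k" by presburger+
      have e2: "s (k*3+2) = r k" "s (k*3+1) = l k" unfolding s_def using m by simp_all
      have "Suc (k*3+1) = k*3+2" by simp
      then have "s (Suc (k*3+1)) = r k" "s (k*3+1) = l k" using e2 by simp_all
      then have "ennreal (dist (f (r k)) (f (l k))) = ennreal (dist (f (s (Suc (k*3+1)))) (f (s (k*3+1))))" by simp
      also have "\<dots> \<le> (\<Sum>j\<in>{k*3..<k*3+3}. ennreal (dist (f (s (Suc j))) (f (s j))))"
        by (rule member_le_sum) auto
      finally show "ennreal (dist (f (r k)) (f (l k))) \<le> (\<Sum>j\<in>{k*3..<k*3+3}. ennreal (dist (f (s (Suc j))) (f (s j))))" .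
    qed
    also have "\<dots> = (\<Sum>j<N*3. ennreal (dist (f (s (Suc j))) (f (s j))))" by (rule sum.nat_group)
    also have "\<dots> \<le> param_length a b f" by (rule chord_le_param_length[OF s0 sN smono])
    finally show ?thesis .
  qed
  finally show "hausdorff_pre1 \<delta> (f ` {a..b}) \<le> param_length a b f" .
qed

lemma param_length_linepath: "param_length 0 1 (linepath p q) \<le> ennreal (dist p q)"
  unfolding param_length_def
proof (rule SUP_least, clarify)
  fix n :: nat and t :: "nat \<Rightarrow> real"
  assume t: "t 0 = 0" "t n = 1" "\<forall>i<n. t i \<le> t (Suc i)"
  have d: "dist (linepath p q x) (linepath p q y) = \<bar>x - y\<bar> * dist p q" for x y
  proof -
    have "linepath p q x - linepath p q y = (x - y) *\<^sub>R (q - p)" by (simp add: linepath_def algebra_simps)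
    then show ?thesis by (simp add: dist_norm norm_minus_commute)
  qed
  have "(\<Sum>i<n. ennreal (dist (linepath p q (t (Suc i))) (linepath p q (t i)))) = (\<Sum>i<n. ennreal ((t (Suc i) - t i) * dist p q))"
    using t(3) by (intro sum.cong) (auto simp: d)
  also have "\<dots> = ennreal (\<Sum>i<n. (t (Suc i) - t i) * dist p q)" using t(3) by (intro sum_ennreal) auto
  also have "(\<Sum>i<n. (t (Suc i) - t i) * dist p q) = (\<Sum>i<n. t (Suc i) - t i) * dist p q" by (simp add: sum_distrib_right)
  also have "\<dots> = dist p q" using t by (simp add: sum_lessThan_telescope)
  finally show "(\<Sum>i<n. ennreal (dist (linepath p q (t (Suc i))) (linepath p q (t i)))) \<le> ennreal (dist p q)" by simp
qed

lemma H_segment: "hausdorff1 (closed_segment p q) \<le> ennreal (dist p q)"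
proof -
  have "closed_segment p q = linepath p q ` {0..1}" by (metis path_image_def path_image_linepath)
  moreover have "hausdorff1 (linepath p q ` {0..1}) \<le> param_length 0 1 (linepath p q)"
  proof (rule H_le_param_length)
    show "continuous_on {0..1} (linepath p q)" using path_linepath[of p q] unfolding path_def .
  qed simp
  ultimately show ?thesis using param_length_linepath by (metis order_trans)
qed



lemma param_le_H:
  fixes f :: "real \<Rightarrow> 'a::euclidean_space"
  assumes cont: "continuous_on {a..b} f" and inj: "inj_on f {a..b}"
  shows "param_length a b f \<le> hausdorff1 (f ` {a..b})"
  unfolding param_length_def
proof (rule SUP_least)
  fix x assume "x \<in> {(n::nat, t::nat \<Rightarrow> real). t 0 = a \<and> t n = b \<and> (\<forall>i<n. t i \<le> t (Suc i))}"
  then obtain n t where x: "x = (n, t)" and t: "t 0 = a" "t n = b" "\<forall>i<n. t i \<le> t (Suc i)" by blast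
  have "(\<Sum>i<n. ennreal (dist (f (t (Suc i))) (f (t i)))) = ennreal (\<Sum>i<n. dist (f (t (Suc i))) (f (t i)))"
    by (rule sum_ennreal) simp
  also have "\<dots> \<le> hausdorff1 (f ` {a..b})"
    by (rule chord_le_H[OF cont inj t(3)]) (use t in simp_all)
  finally show "(case x of (n, t) \<Rightarrow> \<Sum>i<n. ennreal (dist (f (t (Suc i))) (f (t i)))) \<le> hausdorff1 (f ` {a..b})"
    using x by simp
qed

lemma Lfun_le_distinct:
  fixes g :: "real \<Rightarrow> 'a::euclidean_space"
  assumes ab: "a < b" and cont: "continuous_on {a..b} g" and inj: "inj_on g {a..b}"
    and G: "\<Gamma> = g ` {a..b}" and fin: "hausdorff1 \<Gamma> < \<infinity>"
    and e: "0 < \<epsilon>" and p1: "p1 \<in> sausage \<Gamma> \<epsilon>" and p2: "p2 \<in> sausage \<Gamma> \<epsilon>" and ne: "p1 \<noteq> p2"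
  shows "Lfun \<Gamma> \<epsilon> p1 p2 \<le> hausdorff1 \<Gamma> + ennreal (2 * \<epsilon>)"
proof -
  have cpt: "compact \<Gamma>" unfolding G using cont by (rule compact_continuous_image) simp
  have Gne: "\<Gamma> \<noteq> {}" using ab G by auto
  obtain q1 where q1: "q1 \<in> \<Gamma>" "infdist p1 \<Gamma> = dist p1 q1"
    using infdist_attains_inf[OF compact_imp_closed[OF cpt] Gne] by blast
  obtain q2 where q2: "q2 \<in> \<Gamma>" "infdist p2 \<Gamma> = dist p2 q2"
    using infdist_attains_inf[OF compact_imp_closed[OF cpt] Gne] by blast
  have d1: "dist p1 q1 \<le> \<epsilon>" using p1 q1 by (simp add: sausage_def)
  have d2: "dist p2 q2 \<le> \<epsilon>" using p2 q2 by (simp add: sausage_def)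
  obtain s1 where s1: "s1 \<in> {a..b}" "q1 = g s1" using q1 G by auto
  obtain s2 where s2: "s2 \<in> {a..b}" "q2 = g s2" using q2 G by auto
  define \<gamma>2 where "\<gamma>2 = g \<circ> linepath s1 s2"
  have segsub: "closed_segment s1 s2 \<subseteq> {a..b}" using s1 s2 by (intro closed_segment_subset) auto
  have path2: "path \<gamma>2" unfolding \<gamma>2_def
    by (rule path_continuous_image[OF path_linepath]) (use continuous_on_subset[OF cont segsub] in simp)
  have img2: "path_image \<gamma>2 \<subseteq> \<Gamma>" unfolding \<gamma>2_def path_image_compose G using segsub by auto
  have st2: "pathstart \<gamma>2 = q1" "pathfinish \<gamma>2 = q2" by (simp_all add: \<gamma>2_def pathstart_def pathfinish_def s1 s2 linepath_def)
  define \<gamma> where "\<gamma> = linepath p1 q1 +++ \<gamma>2 +++ linepath q2 p2"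
  have path: "path \<gamma>" unfolding \<gamma>_def using path2 st2 by simp
  have st: "pathstart \<gamma> = p1" "pathfinish \<gamma> = p2" by (simp_all add: \<gamma>_def)
  have img: "path_image \<gamma> = closed_segment p1 q1 \<union> path_image \<gamma>2 \<union> closed_segment q2 p2"
    unfolding \<gamma>_def using st2 by (simp add: path_image_join Un_assoc)
  obtain h where h: "arc h" "path_image h \<subseteq> path_image \<gamma>" "pathstart h = p1" "pathfinish h = p2"
    using path_contains_arc[OF path st ne] by blast
  define \<Gamma>' where "\<Gamma>' = path_image h"
  have hc: "continuous_on {0..1} h" and hi: "inj_on h {0..1}" using h(1) by (auto simp: arc_def path_def)
  have G': "\<Gamma>' = h ` {0..1}" by (simp add: \<Gamma>'_def path_image_def)
  have "hausdorff1 \<Gamma>' \<le> hausdorff1 (closed_segment p1 q1 \<union> path_image \<gamma>2 \<union> closed_segment q2 p2)"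
    using h(2) img by (intro H_mono) (simp add: \<Gamma>'_def)
  also have "\<dots> \<le> hausdorff1 (closed_segment p1 q1 \<union> path_image \<gamma>2) + hausdorff1 (closed_segment q2 p2)"
    by (rule H_subadd)
  also have "\<dots> \<le> hausdorff1 (closed_segment p1 q1) + hausdorff1 (path_image \<gamma>2) + hausdorff1 (closed_segment q2 p2)"
    by (intro add_mono H_subadd order_refl)
  also have "\<dots> \<le> ennreal \<epsilon> + hausdorff1 \<Gamma> + ennreal \<epsilon>"
  proof (intro add_mono)
    show "hausdorff1 (closed_segment p1 q1) \<le> ennreal \<epsilon>" using H_segment[of p1 q1] d1 by (meson ennreal_leI order_trans)
    show "hausdorff1 (closed_segment q2 p2) \<le> ennreal \<epsilon>" using H_segment[of q2 p2] d2 by (metis dist_commute ennreal_leI order_trans)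
    show "hausdorff1 (path_image \<gamma>2) \<le> hausdorff1 \<Gamma>" using img2 by (rule H_mono)
  qed
  also have "\<dots> = hausdorff1 \<Gamma> + ennreal (2 * \<epsilon>)" using e by (simp add: ac_simps flip: ennreal_plus)
  finally have HG': "hausdorff1 \<Gamma>' \<le> hausdorff1 \<Gamma> + ennreal (2 * \<epsilon>)" .
  have mem: "\<Gamma>' \<in> {\<Gamma>'. simple_curve \<Gamma>' \<and> rectifiable_curve \<Gamma>' \<and> \<Gamma>' \<subseteq> sausage \<Gamma> \<epsilon> \<and> p1 \<in> \<Gamma>' \<and> p2 \<in> \<Gamma>'}"
  proof (intro CollectI conjI)
    show "simple_curve \<Gamma>'" unfolding simple_curve_def using hc hi G' by (intro exI[of _ 0] exI[of _ 1] exI[of _ h]) simp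
    have "param_length 0 1 h \<le> hausdorff1 (h ` {0..1})" by (rule param_le_H[OF hc hi])
    also have "\<dots> < \<infinity>"
    proof -
      have "hausdorff1 \<Gamma> + ennreal (2 * \<epsilon>) < top" using fin by simp
      then show ?thesis using HG' G' by (simp add: le_less_trans)
    qed
    finally show "rectifiable_curve \<Gamma>'" unfolding rectifiable_curve_def using hc G' by (intro exI[of _ 0] exI[of _ 1] exI[of _ h]) simp
    show "\<Gamma>' \<subseteq> sausage \<Gamma> \<epsilon>"
    proof
      fix z assume "z \<in> \<Gamma>'"
      then have "z \<in> closed_segment p1 q1 \<union> path_image \<gamma>2 \<union> closed_segment q2 p2" using h(2) img by (auto simp: \<Gamma>'_def)
      then show "z \<in> sausage \<Gamma> \<epsilon>"
      proof (elim UnE)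
        assume "z \<in> closed_segment p1 q1"
        then have "dist z q1 \<le> \<epsilon>" using dist_in_closed_segment[of z p1 q1] d1 by simp
        then show ?thesis using infdist_le[OF q1(1), of z] by (simp add: sausage_def)
      next
        assume "z \<in> path_image \<gamma>2"
        then show ?thesis using img2 e by (auto simp: sausage_def)
      next
        assume "z \<in> closed_segment q2 p2"
        then have "dist z q2 \<le> \<epsilon>" using dist_in_closed_segment[of z q2 p2] d2 by (simp add: dist_commute)
        then show ?thesis using infdist_le[OF q2(1), of z] by (simp add: sausage_def)
      qed
    qed
    show "p1 \<in> \<Gamma>'" using h(3) by (metis \<Gamma>'_def pathstart_in_path_image)
    show "p2 \<in> \<Gamma>'" using h(4) by (metis \<Gamma>'_def pathfinish_in_path_image)
  qed
  have "Lfun \<Gamma> \<epsilon> p1 p2 \<le> hausdorff1 \<Gamma>'" unfolding Lfun_def using mem by (rule INF_lower)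
  then show ?thesis using HG' by (rule order_trans)
qed



lemma track:
  fixes g :: "real \<Rightarrow> 'a::euclidean_space"
  assumes ab: "a < b" and cont: "continuous_on {a..b} g" and inj: "inj_on g {a..b}"
    and r: "r > 0" and tmono: "\<forall>i<n. t i \<le> t (Suc i)" and tin: "\<And>i. i \<le> n \<Longrightarrow> t i \<in> {a..b}"
  shows "\<exists>\<epsilon>0>0. \<forall>\<epsilon> (p::real \<Rightarrow> 'a) (c::real) d. 0 < \<epsilon> \<longrightarrow> \<epsilon> < \<epsilon>0 \<longrightarrow> c \<le> d \<longrightarrow> continuous_on {c..d} p \<longrightarrow>
     p ` {c..d} \<subseteq> sausage (g ` {a..b}) \<epsilon> \<longrightarrow> p c = g a \<longrightarrow> p d = g b \<longrightarrow>
     (\<exists>\<tau>. (\<forall>i<n. \<tau> i \<le> \<tau> (Suc i)) \<and> (\<forall>i\<le>n. c \<le> \<tau> i \<and> \<tau> i \<le> d \<and> dist (p (\<tau> i)) (g (t i)) < r))"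
proof -
  define \<Gamma> where "\<Gamma> = g ` {a..b}"
  have cpt: "compact \<Gamma>" unfolding \<Gamma>_def using cont by (rule compact_continuous_image) simp
  have Gne: "\<Gamma> \<noteq> {}" using ab by (auto simp: \<Gamma>_def)
  have "uniformly_continuous_on {a..b} g" using cont by (simp add: compact_uniformly_continuous)
  then obtain \<omega>2 where \<omega>2: "\<omega>2 > 0"
    and ucg: "\<And>u v. u \<in> {a..b} \<Longrightarrow> v \<in> {a..b} \<Longrightarrow> dist v u < \<omega>2 \<Longrightarrow> dist (g v) (g u) < r/3"
    unfolding uniformly_continuous_on_def using r by (metis divide_pos_pos zero_less_numeral)
  define \<omega> where "\<omega> = \<omega>2 / 3"
  have \<omega>: "\<omega> > 0" using \<omega>2 by (simp add: \<omega>_def)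
  define G where "G = inv_into {a..b} g"
  have Gg: "\<forall>x\<in>{a..b}. G (g x) = x" using inj by (simp add: G_def)
  have "continuous_on \<Gamma> G" unfolding \<Gamma>_def using continuous_on_inv[OF cont compact_Icc Gg] .
  then have "uniformly_continuous_on \<Gamma> G" using cpt by (simp add: compact_uniformly_continuous)
  then obtain \<theta> where \<theta>: "\<theta> > 0"
    and ucG: "\<And>x y. x \<in> \<Gamma> \<Longrightarrow> y \<in> \<Gamma> \<Longrightarrow> dist y x < \<theta> \<Longrightarrow> dist (G y) (G x) < \<omega>"
    unfolding uniformly_continuous_on_def using \<omega> by metis
  have ginv: "\<bar>u - v\<bar> < \<omega>" if "u \<in> {a..b}" "v \<in> {a..b}" "dist (g u) (g v) < \<theta>" for u v
  proof -
    have "dist (G (g u)) (G (g v)) < \<omega>" using ucG[of "g v" "g u"] that by (auto simp: \<Gamma>_def)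
    then show ?thesis using Gg that by (simp add: dist_real_def)
  qed
  define \<epsilon>0 where "\<epsilon>0 = min (\<theta>/4) (r/3)"
  have \<epsilon>0: "\<epsilon>0 > 0" using \<theta> r by (simp add: \<epsilon>0_def)
  have main: "\<exists>\<tau>. (\<forall>i<n. \<tau> i \<le> \<tau> (Suc i)) \<and> (\<forall>i\<le>n. c \<le> \<tau> i \<and> \<tau> i \<le> d \<and> dist (p (\<tau> i)) (g (t i)) < r)"
    if e: "0 < \<epsilon>" "\<epsilon> < \<epsilon>0" and cd: "c \<le> d" and pc: "continuous_on {c..d} p"
      and psub: "p ` {c..d} \<subseteq> sausage (g ` {a..b}) \<epsilon>" and pca: "p c = g a" and pdb: "p d = g b"
    for \<epsilon> :: real and p :: "real \<Rightarrow> 'a" and c d :: real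
  proof -
    have "uniformly_continuous_on {c..d} p" using pc by (simp add: compact_uniformly_continuous)
    then obtain \<eta> where \<eta>: "\<eta> > 0"
      and ucp: "\<And>s s'. s \<in> {c..d} \<Longrightarrow> s' \<in> {c..d} \<Longrightarrow> dist s' s < \<eta> \<Longrightarrow> dist (p s') (p s) < \<epsilon>"
      unfolding uniformly_continuous_on_def using e(1) by metis
    define R where "R s u \<longleftrightarrow> u \<in> {a..b} \<and> dist (p s) (g u) \<le> \<epsilon>" for s u
    have exR: "\<exists>u. R s u" if s: "s \<in> {c..d}" for s
    proof -
      obtain q where q: "q \<in> \<Gamma>" "infdist (p s) \<Gamma> = dist (p s) q"
        using infdist_attains_inf[OF compact_imp_closed[OF cpt] Gne] by blast
      obtain u where u: "u \<in> {a..b}" "q = g u" using q(1) by (auto simp: \<Gamma>_def)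
      have "p s \<in> sausage (g ` {a..b}) \<epsilon>" using psub s by (rule subsetD[OF _ imageI])
      then have "infdist (p s) \<Gamma> \<le> \<epsilon>" by (simp add: sausage_def \<Gamma>_def)
      then show ?thesis using q u by (auto simp: R_def)
    qed
    have close: "\<bar>u - u'\<bar> < \<omega>" if "s \<in> {c..d}" "s' \<in> {c..d}" "\<bar>s - s'\<bar> < \<eta>" "R s u" "R s' u'" for s s' u u'
    proof -
      have "dist (p s') (p s) < \<epsilon>" using ucp[of s s'] that by (simp add: dist_real_def abs_minus_commute)
      moreover have "dist (p s) (g u) \<le> \<epsilon>" "dist (p s') (g u') \<le> \<epsilon>"
        using that by (auto simp: R_def)
      moreover have "dist (g u) (g u') \<le> dist (p s) (g u) + dist (p s') (p s) + dist (p s') (g u')"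
        using dist_triangle[of "g u" "g u'" "p s"] dist_triangle[of "p s" "g u'" "p s'"]
        by (simp add: dist_commute)
      ultimately have "dist (g u) (g u') < \<theta>" using e \<epsilon>0_def by linarith
      moreover have "u \<in> {a..b}" "u' \<in> {a..b}" using that by (auto simp: R_def)
      ultimately show ?thesis using ginv by blast
    qed
    define S where "S i = {s \<in> {c..d}. \<exists>u. R s u \<and> t i - \<omega> \<le> u}" for i
    have dS: "d \<in> S i" if "i \<le> n" for i
    proof -
      have "R d b" using ab pdb e by (simp add: R_def)
      moreover have "t i - \<omega> \<le> b" using tin[OF that] \<omega> by simp
      ultimately show ?thesis using cd by (auto simp: S_def)
    qed
    have bdS: "bdd_below (S i)" for i by (rule bdd_belowI[of _ c]) (simp add: S_def)
    define \<tau> where "\<tau> i = Inf (S i)" for i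
    have \<tau>in: "c \<le> \<tau> i \<and> \<tau> i \<le> d" if "i \<le> n" for i
    proof
      show "\<tau> i \<le> d" unfolding \<tau>_def by (rule cInf_lower[OF dS[OF that] bdS])
      show "c \<le> \<tau> i" unfolding \<tau>_def using dS[OF that] by (intro cInf_greatest) (auto simp: S_def)
    qed
    have \<tau>mono: "\<forall>i<n. \<tau> i \<le> \<tau> (Suc i)"
    proof (intro allI impI)
      fix i assume i: "i < n"
      have ti: "t i \<le> t (Suc i)" using tmono i by simp
      have "S (Suc i) \<subseteq> S i"
      proof
        fix s assume "s \<in> S (Suc i)"
        then obtain u where "s \<in> {c..d}" "R s u" "t (Suc i) - \<omega> \<le> u" by (auto simp: S_def)
        then show "s \<in> S i" using ti unfolding S_def by (intro CollectI conjI exI[of _ u]) auto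
      qed
      then show "\<tau> i \<le> \<tau> (Suc i)" unfolding \<tau>_def using dS[of "Suc i"] i bdS by (intro cInf_superset_mono) auto
    qed
    have \<tau>close: "dist (p (\<tau> i)) (g (t i)) < r" if i: "i \<le> n" for i
    proof -
      have Sne: "S i \<noteq> {}" using dS[OF i] by blast
      have "\<tau> i < \<tau> i + \<eta>/2" using \<eta> by simp
      then obtain sp where sp: "sp \<in> S i" "sp < \<tau> i + \<eta>/2"
        unfolding \<tau>_def using cInf_less_iff[OF Sne bdS] by blast
      have sp_ge: "\<tau> i \<le> sp" unfolding \<tau>_def by (rule cInf_lower[OF sp(1) bdS])
      have spin: "sp \<in> {c..d}" using sp(1) by (simp add: S_def)
      obtain up where up: "R sp up" "t i - \<omega> \<le> up" using sp(1) by (auto simp: S_def)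
      have tiin: "t i \<in> {a..b}" using tin[OF i] .
      have ubound: "\<bar>up - t i\<bar> \<le> \<omega>"
      proof (cases "\<tau> i = c")
        case True
        have "R c a" using pca e ab by (simp add: R_def)
        moreover have "\<bar>sp - c\<bar> < \<eta>" using sp sp_ge True \<eta> by simp
        ultimately have "\<bar>up - a\<bar> < \<omega>" using close[of sp c up a] spin cd up(1) by simp
        then show ?thesis using up(2) tiin by (simp add: abs_less_iff abs_le_iff)
      next
        case False
        then have tgc: "\<tau> i > c" using \<tau>in[OF i] by simp
        define sm where "sm = max c (\<tau> i - \<eta>/2)"
        have smlt: "sm < \<tau> i" using tgc \<eta> by (simp add: sm_def)
        have smin: "sm \<in> {c..d}" using smlt \<tau>in[OF i] by (simp add: sm_def)
        have smS: "sm \<notin> S i"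
        proof
          assume "sm \<in> S i"
          then have "\<tau> i \<le> sm" unfolding \<tau>_def by (rule cInf_lower[OF _ bdS])
          then show False using smlt by simp
        qed
        obtain um where um: "R sm um" using exR[OF smin] by blast
        have umlt: "um < t i - \<omega>" using smS um smin by (auto simp: S_def)
        have "\<bar>sp - sm\<bar> < \<eta>" using sp sp_ge smlt by (simp add: sm_def) 
        then have "\<bar>up - um\<bar> < \<omega>" using close[of sp sm up um] spin smin up(1) um by simp
        then show ?thesis using umlt up(2) by (simp add: abs_less_iff abs_le_iff)
      qed
      have upin: "up \<in> {a..b}" using up(1) by (simp add: R_def)
      have "dist (g up) (g (t i)) < r/3"
        using ucg[OF tiin upin] ubound \<omega>2 by (simp add: dist_real_def \<omega>_def)
      moreover have "dist (p (\<tau> i)) (p sp) < \<epsilon>"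
        using ucp[of sp "\<tau> i"] spin \<tau>in[OF i] sp sp_ge \<eta> by (simp add: dist_real_def)
      moreover have "dist (p sp) (g up) \<le> \<epsilon>" using up(1) by (simp add: R_def)
      moreover have "dist (p (\<tau> i)) (g (t i)) \<le> dist (p (\<tau> i)) (p sp) + dist (p sp) (g up) + dist (g up) (g (t i))"
        using dist_triangle[of "p (\<tau> i)" "g (t i)" "p sp"] dist_triangle[of "p sp" "g (t i)" "g up"] by simp
      ultimately show ?thesis using e \<epsilon>0_def by linarith
    qed
    show "\<exists>\<tau>. (\<forall>i<n. \<tau> i \<le> \<tau> (Suc i)) \<and> (\<forall>i\<le>n. c \<le> \<tau> i \<and> \<tau> i \<le> d \<and> dist (p (\<tau> i)) (g (t i)) < r)"
      using \<tau>mono \<tau>in \<tau>close by blast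
  qed
  show ?thesis
    apply (rule exI[of _ \<epsilon>0])
    apply (intro conjI allI impI \<epsilon>0)
    apply (rule main)
          apply assumption+
    done
qed



lemma Lfun_lower:
  fixes g :: "real \<Rightarrow> 'a::euclidean_space"
  assumes ab: "a < b" and cont: "continuous_on {a..b} g" and inj: "inj_on g {a..b}"
    and G: "\<Gamma> = g ` {a..b}" and t0: "t 0 = a" and tn: "t n = b" and tmono: "\<forall>i<n. t i \<le> t (Suc i)"
    and e: "e > 0"
  shows "\<exists>\<epsilon>0>0. \<forall>\<epsilon>. 0 < \<epsilon> \<longrightarrow> \<epsilon> < \<epsilon>0 \<longrightarrow>
    ennreal ((\<Sum>i<n. dist (g (t (Suc i))) (g (t i))) - e) \<le> Lfun \<Gamma> \<epsilon> (g a) (g b)"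
proof -
  define r where "r = e / (2 * real n + 1)"
  have r: "r > 0" using e by (simp add: r_def)
  have re: "2 * real n * r \<le> e"
  proof -
    have "2 * real n * r = e * (2 * real n / (2 * real n + 1))" by (simp add: r_def)
    also have "\<dots> \<le> e * 1" using e by (intro mult_left_mono) auto
    finally show ?thesis by simp
  qed
  have tin: "t i \<in> {a..b}" if "i \<le> n" for i
    using mono_chain[OF tmono, of 0 i] mono_chain[OF tmono, of i n] that t0 tn by auto
  obtain \<epsilon>0 where \<epsilon>0: "\<epsilon>0 > 0" and tr: "\<And>\<epsilon> (p::real \<Rightarrow> 'a) (c::real) d. 0 < \<epsilon> \<Longrightarrow> \<epsilon> < \<epsilon>0 \<Longrightarrow> c \<le> d \<Longrightarrow> continuous_on {c..d} p \<Longrightarrow>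
     p ` {c..d} \<subseteq> sausage (g ` {a..b}) \<epsilon> \<Longrightarrow> p c = g a \<Longrightarrow> p d = g b \<Longrightarrow>
     (\<exists>\<tau>. (\<forall>i<n. \<tau> i \<le> \<tau> (Suc i)) \<and> (\<forall>i\<le>n. c \<le> \<tau> i \<and> \<tau> i \<le> d \<and> dist (p (\<tau> i)) (g (t i)) < r))"
    using track[OF ab cont inj r tmono tin] by metis
  have gab: "g a \<noteq> g b"
  proof
    assume "g a = g b"
    then have "a = b" by (rule inj_onD[OF inj]) (use ab in auto)
    then show False using ab by simp
  qed
  have main: "ennreal ((\<Sum>i<n. dist (g (t (Suc i))) (g (t i))) - e) \<le> Lfun \<Gamma> \<epsilon> (g a) (g b)"
    if eps: "0 < \<epsilon>" "\<epsilon> < \<epsilon>0" for \<epsilon>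
    unfolding Lfun_def
  proof (rule INF_greatest)
    fix \<Gamma>' assume "\<Gamma>' \<in> {\<Gamma>'. simple_curve \<Gamma>' \<and> rectifiable_curve \<Gamma>' \<and> \<Gamma>' \<subseteq> sausage \<Gamma> \<epsilon> \<and> g a \<in> \<Gamma>' \<and> g b \<in> \<Gamma>'}"
    then have sc: "simple_curve \<Gamma>'" and sub: "\<Gamma>' \<subseteq> sausage \<Gamma> \<epsilon>" and ga: "g a \<in> \<Gamma>'" and gb: "g b \<in> \<Gamma>'"
      by auto
    obtain c' d' and h :: "real \<Rightarrow> 'a" where h: "c' < d'" "continuous_on {c'..d'} h" "inj_on h {c'..d'}" "\<Gamma>' = h ` {c'..d'}"
      using sc unfolding simple_curve_def by blast
    obtain \<sigma>1 where \<sigma>1: "\<sigma>1 \<in> {c'..d'}" "h \<sigma>1 = g a" using ga h(4) by auto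
    obtain \<sigma>2 where \<sigma>2: "\<sigma>2 \<in> {c'..d'}" "h \<sigma>2 = g b" using gb h(4) by auto
    have "\<sigma>1 \<noteq> \<sigma>2" using \<sigma>1 \<sigma>2 gab by auto
    have "\<exists>(p::real \<Rightarrow> 'a) c d. c < d \<and> continuous_on {c..d} p \<and> inj_on p {c..d} \<and> p ` {c..d} \<subseteq> \<Gamma>' \<and> p c = g a \<and> p d = g b"
    proof (cases "\<sigma>1 < \<sigma>2")
      case True
      have ss: "{\<sigma>1..\<sigma>2} \<subseteq> {c'..d'}" using \<sigma>1 \<sigma>2 by auto
      show ?thesis
        using True continuous_on_subset[OF h(2) ss] inj_on_subset[OF h(3) ss] ss h(4) \<sigma>1 \<sigma>2
        by (intro exI[of _ h] exI[of _ \<sigma>1] exI[of _ \<sigma>2]) auto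
    next
      case False
      then have lt: "\<sigma>2 < \<sigma>1" using \<open>\<sigma>1 \<noteq> \<sigma>2\<close> by simp
      define p where "p s = h (\<sigma>1 + \<sigma>2 - s)" for s
      have ss: "(\<lambda>s. \<sigma>1 + \<sigma>2 - s) ` {\<sigma>2..\<sigma>1} \<subseteq> {c'..d'}" using \<sigma>1 \<sigma>2 by auto
      have pc: "continuous_on {\<sigma>2..\<sigma>1} p" unfolding p_def
        by (rule continuous_on_compose2[OF h(2) _ ss]) (intro continuous_intros)
      have pi: "inj_on p {\<sigma>2..\<sigma>1}"
      proof (rule inj_onI)
        fix x y assume x: "x \<in> {\<sigma>2..\<sigma>1}" and y: "y \<in> {\<sigma>2..\<sigma>1}" and "p x = p y"
        then have "\<sigma>1 + \<sigma>2 - x = \<sigma>1 + \<sigma>2 - y"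
          using inj_onD[OF h(3)] ss unfolding p_def by (meson image_subset_iff)
        then show "x = y" by simp
      qed
      have pim: "p ` {\<sigma>2..\<sigma>1} \<subseteq> \<Gamma>'" using ss h(4) by (auto simp: p_def)
      have "p \<sigma>2 = g a" "p \<sigma>1 = g b" using \<sigma>1 \<sigma>2 by (simp_all add: p_def)
      then show ?thesis using lt pc pi pim by (intro exI[of _ p] exI[of _ \<sigma>2] exI[of _ \<sigma>1]) simp
    qed
    then obtain p :: "real \<Rightarrow> 'a" and c d where p: "c < d" "continuous_on {c..d} p" "inj_on p {c..d}" "p ` {c..d} \<subseteq> \<Gamma>'"
      "p c = g a" "p d = g b" by blast
    have psub: "p ` {c..d} \<subseteq> sausage (g ` {a..b}) \<epsilon>" using p(4) sub G by simp
    obtain \<tau> where \<tau>: "\<forall>i<n. \<tau> i \<le> \<tau> (Suc i)" "\<And>i. i \<le> n \<Longrightarrow> c \<le> \<tau> i \<and> \<tau> i \<le> d \<and> dist (p (\<tau> i)) (g (t i)) < r"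
      using tr[OF eps(1) eps(2) less_imp_le[OF p(1)] p(2) psub p(5) p(6)] by blast
    have "ennreal (\<Sum>i<n. dist (p (\<tau> (Suc i))) (p (\<tau> i))) \<le> hausdorff1 (p ` {c..d})"
      by (rule chord_le_H[OF p(2) p(3) \<tau>(1)]) (use \<tau>(2)[of 0] \<tau>(2)[of n] in auto)
    also have "\<dots> \<le> hausdorff1 \<Gamma>'" using p(4) by (rule H_mono)
    finally have HH: "ennreal (\<Sum>i<n. dist (p (\<tau> (Suc i))) (p (\<tau> i))) \<le> hausdorff1 \<Gamma>'" .
    have trm: "dist (g (t (Suc i))) (g (t i)) - 2 * r \<le> dist (p (\<tau> (Suc i))) (p (\<tau> i))" if i: "i < n" for i
    proof -
      have a1: "dist (p (\<tau> (Suc i))) (g (t (Suc i))) < r" using \<tau>(2)[of "Suc i"] i by simp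
      have a2: "dist (p (\<tau> i)) (g (t i)) < r" using \<tau>(2)[of i] i by simp
      have "dist (g (t (Suc i))) (g (t i)) \<le> dist (g (t (Suc i))) (p (\<tau> (Suc i))) + dist (p (\<tau> (Suc i))) (p (\<tau> i)) + dist (p (\<tau> i)) (g (t i))"
        using dist_triangle[of "g (t (Suc i))" "g (t i)" "p (\<tau> (Suc i))"] dist_triangle[of "p (\<tau> (Suc i))" "g (t i)" "p (\<tau> i)"] by simp
      then show ?thesis using a1 a2 by (simp add: dist_commute)
    qed
    have "(\<Sum>i<n. dist (g (t (Suc i))) (g (t i))) - e \<le> (\<Sum>i<n. dist (g (t (Suc i))) (g (t i))) - 2 * real n * r"
      using re by simp
    also have "\<dots> = (\<Sum>i<n. dist (g (t (Suc i))) (g (t i)) - 2 * r)" by (simp add: sum_subtractf)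
    also have "\<dots> \<le> (\<Sum>i<n. dist (p (\<tau> (Suc i))) (p (\<tau> i)))" using trm by (intro sum_mono) simp
    finally have "ennreal ((\<Sum>i<n. dist (g (t (Suc i))) (g (t i))) - e) \<le> ennreal (\<Sum>i<n. dist (p (\<tau> (Suc i))) (p (\<tau> i)))"
      by (rule ennreal_leI)
    then show "ennreal ((\<Sum>i<n. dist (g (t (Suc i))) (g (t i))) - e) \<le> hausdorff1 \<Gamma>'" using HH by (rule order_trans)
  qed
  show ?thesis using \<epsilon>0 main by blast
qed



lemma Lfun_le_all:
  fixes g :: "real \<Rightarrow> 'a::euclidean_space"
  assumes ab: "a < b" and cont: "continuous_on {a..b} g" and inj: "inj_on g {a..b}"
    and G: "\<Gamma> = g ` {a..b}" and fin: "hausdorff1 \<Gamma> < \<infinity>"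
    and e: "0 < \<epsilon>" and p1: "p1 \<in> sausage \<Gamma> \<epsilon>" and p2: "p2 \<in> sausage \<Gamma> \<epsilon>"
  shows "Lfun \<Gamma> \<epsilon> p1 p2 \<le> hausdorff1 \<Gamma> + ennreal (2 * \<epsilon>)"
proof (cases "p1 = p2")
  case False
  then show ?thesis using Lfun_le_distinct[OF ab cont inj G fin e p1 p2] by simp
next
  case True
  have gab: "g a \<noteq> g b"
  proof
    assume "g a = g b"
    then have "a = b" by (rule inj_onD[OF inj]) (use ab in auto)
    then show False using ab by simp
  qed
  obtain q where q: "q \<in> \<Gamma>" "q \<noteq> p1" using gab G ab
    by (metis atLeastAtMost_iff image_eqI less_imp_le order_refl)
  have qs: "q \<in> sausage \<Gamma> \<epsilon>" using q(1) e by (simp add: sausage_def)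
  have "Lfun \<Gamma> \<epsilon> p1 p2 \<le> Lfun \<Gamma> \<epsilon> p1 q"
    unfolding Lfun_def True by (rule INF_superset_mono) auto
  also have "\<dots> \<le> hausdorff1 \<Gamma> + ennreal (2 * \<epsilon>)"
    using Lfun_le_distinct[OF ab cont inj G fin e p1 qs] q(2) by simp
  finally show ?thesis .
qed

theorem lemma4p9:
  fixes \<Gamma> :: "'a::euclidean_space set"
  assumes "simple_curve \<Gamma>" and "rectifiable_curve \<Gamma>"
  shows "((\<lambda>\<epsilon>. SUP p \<in> sausage \<Gamma> \<epsilon> \<times> sausage \<Gamma> \<epsilon>. Lfun \<Gamma> \<epsilon> (fst p) (snd p))
           \<longlongrightarrow> hausdorff1 \<Gamma>) (at_right 0)"
proof -
  obtain a b and g :: "real \<Rightarrow> 'a" where ab: "a < b" and cont: "continuous_on {a..b} g"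
    and inj: "inj_on g {a..b}" and G: "\<Gamma> = g ` {a..b}"
    using assms(1) unfolding simple_curve_def by blast
  obtain a' b' and f :: "real \<Rightarrow> 'a" where ab': "a' < b'" and contf: "continuous_on {a'..b'} f"
    and Gf: "\<Gamma> = f ` {a'..b'}" and pf: "param_length a' b' f < \<infinity>"
    using assms(2) unfolding rectifiable_curve_def by blast
  have fin: "hausdorff1 \<Gamma> < \<infinity>"
    using H_le_param_length[OF ab' contf] pf Gf by (simp add: le_less_trans)
  define F where "F \<epsilon> = (SUP p \<in> sausage \<Gamma> \<epsilon> \<times> sausage \<Gamma> \<epsilon>. Lfun \<Gamma> \<epsilon> (fst p) (snd p))" for \<epsilon>
  have Fup: "F \<epsilon> \<le> hausdorff1 \<Gamma> + ennreal (2 * \<epsilon>)" if "0 < \<epsilon>" for \<epsilon>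
    unfolding F_def
  proof (rule SUP_least)
    fix p assume "p \<in> sausage \<Gamma> \<epsilon> \<times> sausage \<Gamma> \<epsilon>"
    then show "Lfun \<Gamma> \<epsilon> (fst p) (snd p) \<le> hausdorff1 \<Gamma> + ennreal (2 * \<epsilon>)"
      using Lfun_le_all[OF ab cont inj G fin that] by (cases p) simp
  qed
  have Fge: "Lfun \<Gamma> \<epsilon> (g a) (g b) \<le> F \<epsilon>" if "0 < \<epsilon>" for \<epsilon>
  proof -
    have "g a \<in> \<Gamma>" "g b \<in> \<Gamma>" using G ab by auto
    then have "(g a, g b) \<in> sausage \<Gamma> \<epsilon> \<times> sausage \<Gamma> \<epsilon>" using that by (simp add: sausage_def)
    then show ?thesis unfolding F_def by (rule SUP_upper2) simp
  qed
  have HG: "hausdorff1 \<Gamma> \<le> param_length a b g" using H_le_param_length[OF ab cont] G by simp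
  obtain L where L: "hausdorff1 \<Gamma> = ennreal L" "0 \<le> L" using fin by (cases "hausdorff1 \<Gamma>") auto
  show ?thesis
    unfolding F_def[symmetric]
  proof (rule order_tendstoI)
    fix y assume y: "y < hausdorff1 \<Gamma>"
    then have "y < param_length a b g" using HG by (rule less_le_trans)
    then obtain x where x: "x \<in> {(n::nat, t::nat \<Rightarrow> real). t 0 = a \<and> t n = b \<and> (\<forall>i<n. t i \<le> t (Suc i))}"
      and yx: "y < (case x of (n, t) \<Rightarrow> \<Sum>i<n. ennreal (dist (g (t (Suc i))) (g (t i))))"
      unfolding param_length_def less_SUP_iff by blast
    obtain n t where nt: "x = (n, t)" and t: "t 0 = a" "t n = b" "\<forall>i<n. t i \<le> t (Suc i)" using x by blast
    define C where "C = (\<Sum>i<n. dist (g (t (Suc i))) (g (t i)))"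
    have "y < ennreal C" using yx nt by (simp add: C_def)
    moreover obtain yr where yr: "y = ennreal yr" "0 \<le> yr" using y fin
      by (cases y) (auto simp: top_unique)
    ultimately have yC: "yr < C" using yr by (simp add: ennreal_less_iff)
    define e where "e = (C - yr) / 2"
    have e: "e > 0" using yC by (simp add: e_def)
    obtain \<epsilon>0 where \<epsilon>0: "\<epsilon>0 > 0" and low: "\<And>\<epsilon>. 0 < \<epsilon> \<Longrightarrow> \<epsilon> < \<epsilon>0 \<Longrightarrow> ennreal (C - e) \<le> Lfun \<Gamma> \<epsilon> (g a) (g b)"
      using Lfun_lower[OF ab cont inj G t e] unfolding C_def by blast
    show "eventually (\<lambda>\<epsilon>. y < F \<epsilon>) (at_right 0)"
      unfolding eventually_at_right_field
    proof (intro exI[of _ \<epsilon>0] conjI allI impI)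
      show "0 < \<epsilon>0" by (rule \<epsilon>0)
      fix \<epsilon> :: real assume "0 < \<epsilon>" "\<epsilon> < \<epsilon>0"
      have "yr < C - e" using yC by (simp add: e_def field_simps)
      then have "y < ennreal (C - e)" using yr by (simp add: ennreal_less_iff)
      also have "\<dots> \<le> Lfun \<Gamma> \<epsilon> (g a) (g b)" using low \<open>0 < \<epsilon>\<close> \<open>\<epsilon> < \<epsilon>0\<close> by blast
      also have "\<dots> \<le> F \<epsilon>" using Fge \<open>0 < \<epsilon>\<close> by blast
      finally show "y < F \<epsilon>" .
    qed
  next
    fix y assume y: "hausdorff1 \<Gamma> < y"
    show "eventually (\<lambda>\<epsilon>. F \<epsilon> < y) (at_right 0)"
    proof (cases "y = top")
      case True
      show ?thesis unfolding eventually_at_right_field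
      proof (intro exI[of _ 1] conjI allI impI)
        fix \<epsilon> :: real assume "0 < \<epsilon>" "\<epsilon> < 1"
        have "F \<epsilon> \<le> hausdorff1 \<Gamma> + ennreal (2 * \<epsilon>)" using Fup \<open>0 < \<epsilon>\<close> by blast
        also have "\<dots> < top" using fin by simp
        finally show "F \<epsilon> < y" using True by simp
      qed simp
    next
      case False
      then obtain yr where yr: "y = ennreal yr" "0 \<le> yr" by (cases y) auto
      have Lyr: "L < yr" using y yr L by (simp add: ennreal_less_iff)
      show ?thesis unfolding eventually_at_right_field
      proof (intro exI[of _ "(yr - L) / 2"] conjI allI impI)
        show "0 < (yr - L) / 2" using Lyr by simp
        fix \<epsilon> :: real assume "0 < \<epsilon>" "\<epsilon> < (yr - L) / 2"
        have "F \<epsilon> \<le> hausdorff1 \<Gamma> + ennreal (2 * \<epsilon>)" using Fup \<open>0 < \<epsilon>\<close> by blast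
        also have "\<dots> = ennreal (L + 2 * \<epsilon>)" using L \<open>0 < \<epsilon>\<close> by simp
        also have "\<dots> < ennreal yr"
        proof -
          have "L + 2 * \<epsilon> < yr" using \<open>\<epsilon> < (yr - L) / 2\<close> by (simp add: field_simps)
          moreover have "0 < yr" using Lyr L(2) by linarith
          ultimately have "ennreal (L + 2 * \<epsilon>) < ennreal yr" by (intro ennreal_lessI)
          then show ?thesis .
        qed
        finally show "F \<epsilon> < y" using yr by simp
      qed
    qed
  qed
qed


end
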